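(* Consider the data-selling model described in the context, with network $G$ on $n$ buyers, prior precision $z_0>0$ and marginal cost $\gamma>0$. Assume $$z_0<\frac{1}{2\sqrt{\gamma}}\cdot\frac{n+1}{2n+1}.$$ Let $m=\alpha(G)$ be the independence number of $G$. Then every optimal contract $C$ has the following form: (i) the target set $M(C)$ is a maximum independent set of $G$; (ii) the common precision is $z=\sqrt{m/\gamma}-z_0$, and the price is $p_i=\frac{1}{z_0}-\sqrt{\gamma/m}$ for every $i\in M(C)$.
   Context: Model. There is a finite set of buyers $N=\{1,\dots,n\}$ and an undirected network $G$ on $N$: for $i\neq j$, $g_{ij}=g_{ji}\in\{0,1\}$, with $g_{ij}=1$ iff $i$ and $j$ are linked. $N_i=\{j\neq i: g_{ij}=1\}$ is the set of neighbors of $i$ and $n_i=|N_i|$. A state $\theta\sim N(0,1/z_0)$ with $z_0>0$ is unknown to all. A contract $C$ of the seller consists of a target set $M(C)\subseteq N$, a common precision $z>0$, and prices $p_i\ge 0$ for $i\in M(C)$ (buyers outside $M(C)$ get nothing and pay nothing; quality discrimination is not allowed, so all targeted buyers get the same precision $z$). Each $i\in M(C)$ receives a signal $s_i=\theta+\varepsilon_i$, with $\varepsilon_i\sim N(0,1/z)$ independent of $\theta$ and of each other. Each buyer observes the signals of his neighbors in $M(C)$ (and his own if he is in $M(C)$) and then chooses $a_i\in\mathbb{R}$ to maximize $E[-(a_i-\theta)^2]$. Write $m_i=|N_i\cap M(C)|$. Under optimal (Bayesian) actions, buyer $i\in M(C)$ gets expected payoff $-\frac{1}{z_0+(m_i+1)z}-p_i$,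 and buyer $i\notin M(C)$ gets $-\frac{1}{z_0+m_i z}$. Buyer $i\in M(C)$ accepts iff $p_i\le p(m_i,z):=\frac{1}{z_0+m_iz}-\frac{1}{z_0+(m_i+1)z}$. A contract is feasible if every $i\in M(C)$ accepts. The seller's profit is $\pi(C)=\sum_{i\in M(C)}p_i-\gamma z$ with $\gamma>0$. An optimal contract is a feasible contract maximizing $\pi$. An independent set of $G$ is a set of nodes no two of which are linked. A maximum independent set is an independent set of largest cardinality, and this cardinality is the independence number $\alpha(G)$. *)

theory Defs
  imports Complex_Main
begin

text \<open>A contract is a triple (M, z, p): target set M, common precision z, price function p
  (only the values of p on M matter).\<close>

definition network :: "nat \<Rightarrow> (nat \<Rightarrow> nat \<Rightarrow> bool) \<Rightarrow> bool" where
  "network n g \<longleftrightarrow> (\<forall>i j. g i j \<longrightarrow> i \<in> {1..n} \<and> j \<in> {1..n}) \<and>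
                     (\<forall>i j. g i j \<longleftrightarrow> g j i) \<and> (\<forall>i. \<not> g i i)"

definition nbrs :: "nat \<Rightarrow> (nat \<Rightarrow> nat \<Rightarrow> bool) \<Rightarrow> nat \<Rightarrow> nat set" where
  "nbrs n g i = {j \<in> {1..n}. j \<noteq> i \<and> g i j}"

definition price_bound :: "real \<Rightarrow> nat \<Rightarrow> real \<Rightarrow> real" where
  "price_bound z0 k z = 1 / (z0 + real k * z) - 1 / (z0 + (real k + 1) * z)"

type_synonym contract = "nat set \<times> real \<times> (nat \<Rightarrow> real)"

definition is_contract :: "nat \<Rightarrow> contract \<Rightarrow> bool" where
  "is_contract n C = (case C of (M, z, p) \<Rightarrow> M \<subseteq> {1..n} \<and> z > 0 \<and> (\<forall>i\<in>M. p i \<ge> 0))"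

definition feasible :: "nat \<Rightarrow> (nat \<Rightarrow> nat \<Rightarrow> bool) \<Rightarrow> real \<Rightarrow> contract \<Rightarrow> bool" where
  "feasible n g z0 C = (is_contract n C \<and>
     (case C of (M, z, p) \<Rightarrow> \<forall>i\<in>M. p i \<le> price_bound z0 (card (nbrs n g i \<inter> M)) z))"

definition profit :: "real \<Rightarrow> contract \<Rightarrow> real" where
  "profit \<gamma> C = (case C of (M, z, p) \<Rightarrow> (\<Sum>i\<in>M. p i) - \<gamma> * z)"

definition optimal :: "nat \<Rightarrow> (nat \<Rightarrow> nat \<Rightarrow> bool) \<Rightarrow> real \<Rightarrow> real \<Rightarrow> contract \<Rightarrow> bool" where
  "optimal n g z0 \<gamma> C = (feasible n g z0 C \<and>
     (\<forall>C'. feasible n g z0 C' \<longrightarrow> profit \<gamma> C' \<le> profit \<gamma> C))"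

definition independent_set :: "nat \<Rightarrow> (nat \<Rightarrow> nat \<Rightarrow> bool) \<Rightarrow> nat set \<Rightarrow> bool" where
  "independent_set n g S \<longleftrightarrow> S \<subseteq> {1..n} \<and> (\<forall>i\<in>S. \<forall>j\<in>S. \<not> g i j)"

definition independence_number :: "nat \<Rightarrow> (nat \<Rightarrow> nat \<Rightarrow> bool) \<Rightarrow> nat" where
  "independence_number n g = Max (card ` {S. independent_set n g S})"

definition max_independent_set :: "nat \<Rightarrow> (nat \<Rightarrow> nat \<Rightarrow> bool) \<Rightarrow> nat set \<Rightarrow> bool" where
  "max_independent_set n g S \<longleftrightarrow> independent_set n g S \<and> card S = independence_number n g"

end

theory Submission
  imports Defs
begin

lemma pb_eq:
  assumes "z0 > 0" "z > 0"
  shows "price_bound z0 k z = z / ((z0 + real k * z) * (z0 + (real k + 1) * z))"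
proof -
  have a: "z0 + real k * z > 0" using assms by (simp add: add_pos_nonneg)
  have b: "z0 + (real k + 1) * z > 0" using assms by (simp add: add_pos_nonneg)
  have "1 / (z0 + real k * z) - 1 / (z0 + (real k + 1) * z)
     = ((z0 + (real k + 1) * z) - (z0 + real k * z)) / ((z0 + real k * z) * (z0 + (real k + 1) * z))"
    using a b by (simp add: field_simps)
  also have "(z0 + (real k + 1) * z) - (z0 + real k * z) = z" by (simp add: algebra_simps)
  finally show ?thesis unfolding price_bound_def by simp
qed

lemma frac_lt: "(D::real) > 0 \<Longrightarrow> E > 0 \<Longrightarrow> a * E < b * D \<Longrightarrow> a / D < b / E"
  by (simp add: field_simps)

lemma pb_anti:
  assumes "z0 > 0" "z > 0" "a \<le> b"
  shows "price_bound z0 b z \<le> price_bound z0 a z"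
proof -
  have h1: "z0 + real a * z \<le> z0 + real b * z" using assms by (simp add: mult_right_mono)
  have h2: "z0 + (real a + 1) * z \<le> z0 + (real b + 1) * z" using assms by (simp add: mult_right_mono)
  have p1: "0 < z0 + real a * z" using assms by (simp add: add_pos_nonneg)
  have p2: "0 < z0 + (real a + 1) * z" using assms by (simp add: add_pos_nonneg)
  have "(z0 + real a * z) * (z0 + (real a + 1) * z) \<le> (z0 + real b * z) * (z0 + (real b + 1) * z)"
    using h1 h2 p1 p2 by (intro mult_mono) auto
  moreover have "0 < (z0 + real a * z) * (z0 + (real a + 1) * z)" using p1 p2 by simp
  ultimately show ?thesis using assms by (simp add: pb_eq frac_le)
qed

lemma pb_big:
  assumes "z0 > 0" "z > z0 / 2" "k \<ge> 1"
  shows "real (k + 1) * price_bound z0 k z < price_bound z0 0 z"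
proof -
  define K where "K = real k"
  have K1: "K \<ge> 1" using assms K_def by simp
  have zp: "z > 0" using assms by simp
  have A: "0 < z0 + K * z" "0 < z0 + (K + 1) * z" using assms zp K1 by (simp_all add: add_pos_nonneg)
  have "0 < (2*z - z0) * (z + z0)" using assms by simp
  hence "z0 * z0 < z0 * z + 2 * z * z" by (simp add: algebra_simps)
  moreover have "2 * z * z \<le> (K+1) * z * z" using K1 zp by (simp add: mult_right_mono)
  ultimately have "z0 * z0 < z0 * z + (K+1) * z * z" by linarith
  hence "K * (z0 * z0) < K * (z0 * z + (K+1) * z * z)" using K1 by simp
  hence key: "(K + 1) * (z0 * (z0 + z)) < (z0 + K * z) * (z0 + (K + 1) * z)"
    by (simp add: algebra_simps)
  have "(K + 1) * (z / ((z0 + K * z) * (z0 + (K + 1) * z))) = z * (K+1) / ((z0 + K * z) * (z0 + (K + 1) * z))"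
    by simp
  also have "\<dots> < z / (z0 * (z0 + z))"
  proof (rule frac_lt)
    show "0 < (z0 + K * z) * (z0 + (K + 1) * z)" using A by simp
    show "0 < z0 * (z0 + z)" using zp assms(1) by simp
    show "z * (K + 1) * (z0 * (z0 + z)) < z * ((z0 + K * z) * (z0 + (K + 1) * z))"
      using mult_strict_left_mono[OF key zp] by (simp add: algebra_simps)
  qed
  finally show ?thesis using assms zp by (simp add: pb_eq K_def add.commute)
qed

lemma pb_small:
  assumes "z0 > 0" "z > 0" "z \<le> z0 / 2"
  shows "real (k + 1) * price_bound z0 k z < 7 / (20 * z0)"
proof -
  define K where "K = real k"
  define u where "u = (K + 1) * z"
  have K0: "K \<ge> 0" using K_def by simp
  have up: "u > 0" using u_def K0 assms by simp
  have d1: "z0 / 2 + u \<le> z0 + K * z" using u_def assms by (simp add: algebra_simps)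
  have A: "0 < z0 + K * z" "0 < z0 + (K + 1) * z" using assms K0 by (simp_all add: add_pos_nonneg)
  have sq: "0 < 14 * (u - 19 * z0 / 28)^2 + 31/56 * z0^2" using assms by (simp add: add_nonneg_pos)
  hence s2: "19*z0*u < 14*u^2 + 7*z0^2" by (simp add: power2_eq_square algebra_simps)
  have e: "7 * ((z0 / 2 + u) * (z0 + u)) = 7/2*z0^2 + 21/2*z0*u + 7*u^2"
    by (simp add: field_simps power2_eq_square)
  have "20 * z0 * u < 7 * ((z0 / 2 + u) * (z0 + u))" using s2 e by linarith
  also have "\<dots> \<le> 7 * ((z0 + K * z) * (z0 + u))"
    using d1 up assms by (simp add: mult_right_mono)
  finally have key: "20 * z0 * u < 7 * ((z0 + K * z) * (z0 + (K+1) * z))" by (simp add: u_def)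
  have "(K + 1) * (z / ((z0 + K * z) * (z0 + (K + 1) * z))) = u / ((z0 + K * z) * (z0 + (K + 1) * z))"
    by (simp add: u_def)
  also have "\<dots> < 7 / (20 * z0)"
  proof (rule frac_lt)
    show "0 < (z0 + K * z) * (z0 + (K + 1) * z)" using A by simp
    show "0 < 20 * z0" using assms(1) by simp
    show "u * (20 * z0) < 7 * ((z0 + K * z) * (z0 + (K + 1) * z))" using key by (simp add: algebra_simps)
  qed
  finally show ?thesis using assms by (simp add: pb_eq K_def add.commute)
qed

lemma cw_aux:
  fixes w :: "nat \<Rightarrow> real"
  assumes net: "network n g"
    and anti: "\<And>a b. a \<le> b \<Longrightarrow> w b \<le> w a"
    and w0: "w 0 \<le> H" and wk: "\<And>k. k \<ge> 1 \<Longrightarrow> real (k + 1) * w k < H"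
  shows "M \<subseteq> {1..n} \<Longrightarrow> \<exists>S. independent_set n g S \<and> S \<subseteq> M
     \<and> (\<Sum>i\<in>M. w (card (nbrs n g i \<inter> M))) \<le> H * real (card S)
     \<and> ((\<exists>i\<in>M. card (nbrs n g i \<inter> M) \<ge> 1) \<longrightarrow> (\<Sum>i\<in>M. w (card (nbrs n g i \<inter> M))) < H * real (card S))"
proof -
  assume Msub: "M \<subseteq> {1..n}"
  have finM: "finite M" using Msub finite_subset by blast
  have sym: "\<And>i j. g i j \<longleftrightarrow> g j i" and irr: "\<And>i. \<not> g i i"
    using net unfolding network_def by auto
  show ?thesis using finM Msub
  proof (induction M rule: finite_psubset_induct)
    case (psubset M)
    define d where "d = (\<lambda>X i. card (nbrs n g i \<inter> X))"
    show ?case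
    proof (cases "M = {}")
      case True
      then show ?thesis by (rule_tac x="{}" in exI) (simp add: independent_set_def)
    next
      case False
      have "Min (d M ` M) \<in> d M ` M" using False psubset.hyps by (intro Min_in) auto
      then obtain v where vM: "v \<in> M" and vmin0: "d M v = Min (d M ` M)" by auto
      have vmin: "\<And>i. i \<in> M \<Longrightarrow> d M v \<le> d M i"
        using vmin0 psubset.hyps by simp
      define Nv where "Nv = nbrs n g v \<inter> M"
      define Cv where "Cv = insert v Nv"
      define R where "R = M - Cv"
      have finNv: "finite Nv" using psubset.hyps Nv_def by simp
      have vNv: "v \<notin> Nv" unfolding Nv_def nbrs_def by simp
      have cardCv: "card Cv = d M v + 1" using finNv vNv unfolding Cv_def d_def Nv_def by simp
      have CvM: "Cv \<subseteq> M" using vM unfolding Cv_def Nv_def by auto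
      have RM: "R \<subset> M" using vM unfolding R_def Cv_def by auto
      have Rsub: "R \<subseteq> {1..n}" using RM psubset.prems by auto
      obtain S' where S': "independent_set n g S'" "S' \<subseteq> R"
        "(\<Sum>i\<in>R. w (d R i)) \<le> H * real (card S')"
        "(\<exists>i\<in>R. d R i \<ge> 1) \<longrightarrow> (\<Sum>i\<in>R. w (d R i)) < H * real (card S')"
        using psubset.IH[OF RM Rsub] unfolding d_def by blast
      define S where "S = insert v S'"
      have vS': "v \<notin> S'" using S'(2) unfolding R_def Cv_def by auto
      have finS': "finite S'" using S'(1) unfolding independent_set_def using finite_subset by blast
      have cardS: "card S = card S' + 1" using vS' finS' unfolding S_def by simp
      have vn: "v \<in> {1..n}" using vM psubset.prems by auto
      have indS: "independent_set n g S"
        unfolding independent_set_def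
      proof (intro conjI ballI)
        show "S \<subseteq> {1..n}" using S'(1) vn unfolding S_def independent_set_def by auto
      next
        fix i j assume ij: "i \<in> S" "j \<in> S"
        have noedge: "\<not> g v j" if "j \<in> S'" for j
        proof
          assume gvj: "g v j"
          have jM: "j \<in> M" using that S'(2) RM by auto
          have "j \<in> {1..n}" using jM psubset.prems by blast
          moreover have "j \<noteq> v" using that vS' by auto
          ultimately have "j \<in> M" "j \<in> {1..n}" "j \<noteq> v" using jM by auto
          hence "j \<in> Nv" using gvj unfolding Nv_def nbrs_def by auto
          thus False using that S'(2) unfolding R_def Cv_def by auto
        qed
        show "\<not> g i j"
        proof (cases "i = v")
          case True
          then show ?thesis using ij noedge irr unfolding S_def by auto
        next
          case False
          then show ?thesis using ij noedge sym S'(1) unfolding S_def independent_set_def by auto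
        qed
      qed
      have SM: "S \<subseteq> M" using S'(2) vM RM unfolding S_def by auto
      have split: "(\<Sum>i\<in>M. w (d M i)) = (\<Sum>i\<in>R. w (d M i)) + (\<Sum>i\<in>Cv. w (d M i))"
        using sum.subset_diff[OF CvM psubset.hyps] unfolding R_def by simp
      have c1: "(\<Sum>i\<in>Cv. w (d M i)) \<le> real (card Cv) * w (d M v)"
        by (rule sum_bounded_above) (use CvM vmin anti in auto)
      have c1': "real (card Cv) * w (d M v) \<le> H"
      proof (cases "d M v = 0")
        case True then show ?thesis using cardCv w0 by simp
      next
        case False then show ?thesis using cardCv wk[of "d M v"] by simp
      qed
      have dRM: "d R i \<le> d M i" for i
        unfolding d_def using RM psubset.hyps by (intro card_mono) auto
      have c2: "(\<Sum>i\<in>R. w (d M i)) \<le> (\<Sum>i\<in>R. w (d R i))"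
        by (rule sum_mono) (use anti dRM in auto)
      have main: "(\<Sum>i\<in>M. w (d M i)) \<le> H * real (card S)"
        using split c1 c1' c2 S'(3) cardS by (simp add: algebra_simps)
      have strict: "(\<Sum>i\<in>M. w (d M i)) < H * real (card S)" if ex: "\<exists>i\<in>M. d M i \<ge> 1"
      proof (cases "d M v = 0")
        case False
        hence "real (card Cv) * w (d M v) < H" using cardCv wk[of "d M v"] by simp
        then show ?thesis using split c1 c2 S'(3) cardS by (simp add: algebra_simps)
      next
        case True
        hence Nv0: "Nv = {}" using finNv unfolding d_def Nv_def by simp
        obtain i where i: "i \<in> M" "d M i \<ge> 1" using ex by auto
        have iv: "i \<noteq> v" using i True by auto
        have iR: "i \<in> R" using i iv Nv0 unfolding R_def Cv_def by auto
        have "nbrs n g i \<inter> R = nbrs n g i \<inter> M"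
        proof -
          have "v \<notin> nbrs n g i"
          proof
            assume "v \<in> nbrs n g i"
            hence "g v i" "i \<noteq> v" using sym unfolding nbrs_def by auto
            hence "i \<in> Nv" using i(1) psubset.prems unfolding Nv_def nbrs_def by auto
            thus False using Nv0 by simp
          qed
          thus ?thesis using Nv0 unfolding R_def Cv_def by auto
        qed
        hence "d R i \<ge> 1" using i unfolding d_def by simp
        hence "(\<Sum>i\<in>R. w (d R i)) < H * real (card S')" using S'(4) iR by blast
        then show ?thesis using split c1 c1' c2 cardS by (simp add: algebra_simps)
      qed
      show ?thesis using indS SM main strict unfolding d_def by blast
    qed
  qed
qed

lemma indep_facts:
  shows "finite {S. independent_set n g S}"
    and "independent_set n g S \<Longrightarrow> card S \<le> independence_number n g"
    and "\<exists>S. independent_set n g S \<and> card S = independence_number n g"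
proof -
  have fin: "finite {S. independent_set n g S}"
    by (rule finite_subset[of _ "Pow {1..n}"]) (auto simp: independent_set_def)
  show "finite {S. independent_set n g S}" by (rule fin)
  show "independent_set n g S \<Longrightarrow> card S \<le> independence_number n g"
    unfolding independence_number_def using fin by (intro Max_ge) auto
  have ne: "{S. independent_set n g S} \<noteq> {}"
    using independent_set_def[of n g "{}"] by auto
  have "independence_number n g \<in> card ` {S. independent_set n g S}"
    unfolding independence_number_def using fin ne by (intro Max_in) auto
  thus "\<exists>S. independent_set n g S \<and> card S = independence_number n g" by auto
qed

theorem theorem1:
  fixes n :: nat and g :: "nat \<Rightarrow> nat \<Rightarrow> bool" and z0 \<gamma> :: real
    and M :: "nat set" and z :: real and p :: "nat \<Rightarrow> real"
  assumes "network n g" and "z0 > 0" and "\<gamma> > 0"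
    and "z0 < 1 / (2 * sqrt \<gamma>) * ((real n + 1) / (2 * real n + 1))"
    and "optimal n g z0 \<gamma> (M, z, p)"
  shows "max_independent_set n g M
    \<and> z = sqrt (real (independence_number n g) / \<gamma>) - z0
    \<and> (\<forall>i\<in>M. p i = 1 / z0 - sqrt (\<gamma> / real (independence_number n g)))"
proof -
  note net = assms(1) and z0p = assms(2) and gp = assms(3) and cond = assms(4)
  have sym: "\<And>i j. g i j \<longleftrightarrow> g j i" and irr: "\<And>i. \<not> g i i"
    using net unfolding network_def by auto
  define a where "a = independence_number n g"
  define al where "al = real a"
  define dM where "dM = (\<lambda>i. card (nbrs n g i \<inter> M))"
  have feas: "feasible n g z0 (M, z, p)" and opt: "\<And>C'. feasible n g z0 C' \<Longrightarrow> profit \<gamma> C' \<le> profit \<gamma> (M, z, p)"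
    using assms(5) unfolding optimal_def by auto
  have Msub: "M \<subseteq> {1..n}" and zp: "z > 0" and pnn: "\<And>i. i \<in> M \<Longrightarrow> p i \<ge> 0"
    and ple: "\<And>i. i \<in> M \<Longrightarrow> p i \<le> price_bound z0 (dM i) z"
    using feas unfolding feasible_def is_contract_def dM_def by auto
  have finM: "finite M" using Msub finite_subset by blast
  define Rv where "Rv = (\<Sum>i\<in>M. price_bound z0 (dM i) z) - \<gamma> * z"
  have prof: "profit \<gamma> (M, z, p) = (\<Sum>i\<in>M. p i) - \<gamma> * z" unfolding profit_def by simp
  have profR: "profit \<gamma> (M, z, p) \<le> Rv"
    unfolding prof Rv_def using ple by (simp add: sum_mono)
  show ?thesis
  proof (cases "n = 0")
    case True
    hence "M = {}" using Msub by auto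
    have "feasible n g z0 ({}, z/2, p)" using zp unfolding feasible_def is_contract_def by simp
    from opt[OF this] have "- \<gamma> * (z/2) \<le> - \<gamma> * z" unfolding profit_def using \<open>M = {}\<close> by simp
    hence False using gp zp by (simp add: algebra_simps)
    thus ?thesis ..
  next
    case False
    hence n1: "n \<ge> 1" by simp
    have "independent_set n g {1}" unfolding independent_set_def using n1 irr by auto
    hence a1: "a \<ge> 1" using indep_facts(2)[of n g "{1}"] unfolding a_def by simp
    hence al1: "al \<ge> 1" unfolding al_def by simp
    define s where "s = sqrt \<gamma>"
    have sp: "s > 0" using gp s_def by simp
    have ss: "s * s = \<gamma>" using gp s_def by simp
    define q where "q = (real n + 1) / (2 * real n + 1)"
    have q1: "q \<le> 1" unfolding q_def by simp
    have z0s: "z0 * s < q / 2"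
    proof -
      have "z0 < q / (2 * s)" using cond unfolding q_def s_def by (simp add: mult.commute)
      thus ?thesis using sp by (simp add: field_simps)
    qed
    define t where "t = sqrt (al / \<gamma>)"
    have tp: "t > 0" unfolding t_def using al1 gp by simp
    have tt: "al = \<gamma> * (t * t)" unfolding t_def using al1 gp by simp
    define sa where "sa = sqrt al"
    have sa1: "sa \<ge> 1" unfolding sa_def using al1 by simp
    have tsa: "t * s = sa" unfolding t_def s_def sa_def using gp al1
      by (simp add: real_sqrt_divide)
    have zsp: "t - z0 > 0"
    proof -
      have "z0 * s < 1 * s * t" using z0s q1 tsa sa1 by (simp add: mult.commute)
      thus ?thesis using sp by simp
    qed
    define F where "F = (\<lambda>x. 1 / z0 - 1 / (z0 + x))"
    have pb0: "\<And>x. price_bound z0 0 x = F x" unfolding price_bound_def F_def by simp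
    have Fpos: "\<And>x. x > 0 \<Longrightarrow> F x > 0" unfolding F_def using z0p by (simp add: frac_less2)
    define Ps where "Ps = al / z0 - 2 * \<gamma> * t + \<gamma> * z0"
    have amgm: "Ps - (al * F x - \<gamma> * x) = \<gamma> * (z0 + x - t)^2 / (z0 + x)" if "x > 0" for x
    proof -
      have T: "z0 + x > 0" using that z0p by simp
      have "al / z0 - 2 * \<gamma> * t + \<gamma> * z0 - (al * (1 / z0 - 1 / (z0 + x)) - \<gamma> * x)
          = al / (z0 + x) + \<gamma> * (z0 + x) - 2 * \<gamma> * t" by (simp add: algebra_simps)
      also have "\<dots> = \<gamma> * (z0 + x - t)^2 / (z0 + x)" unfolding tt using T
        by (simp add: field_simps power2_eq_square)
      finally show ?thesis unfolding Ps_def F_def .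
    qed
    have amgm_le: "al * F x - \<gamma> * x \<le> Ps" if "x > 0" for x
    proof -
      have "\<gamma> * (z0 + x - t)^2 / (z0 + x) \<ge> 0" using gp that z0p by simp
      thus ?thesis using amgm[OF that] by linarith
    qed
    obtain Ss where Ss: "independent_set n g Ss" "card Ss = a"
      using indep_facts(3) unfolding a_def by blast
    define Cs where "Cs = (Ss, t - z0, (\<lambda>_::nat. F (t - z0)))"
    have dSs: "nbrs n g i \<inter> Ss = {}" if "i \<in> Ss" for i
      using Ss(1) that unfolding independent_set_def nbrs_def by auto
    have feasCs: "feasible n g z0 Cs"
      unfolding Cs_def feasible_def is_contract_def
      using Ss(1) zsp Fpos[OF zsp] dSs pb0 unfolding independent_set_def by auto
    have profCs: "profit \<gamma> Cs = Ps"
    proof -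
      have "profit \<gamma> Cs = al * F (t - z0) - \<gamma> * (t - z0)"
        unfolding Cs_def profit_def al_def using Ss(2) by simp
      also have "\<dots> = Ps" using amgm[OF zsp] by simp
      finally show ?thesis .
    qed
    have PsR: "Ps \<le> Rv" using opt[OF feasCs] profCs profR by simp
    have Mind: "independent_set n g M"
    proof (rule ccontr)
      assume nind: "\<not> independent_set n g M"
      then obtain i j where ij: "i \<in> M" "j \<in> M" "g i j" using Msub unfolding independent_set_def by auto
      have jn: "j \<in> nbrs n g i \<inter> M" using ij Msub irr unfolding nbrs_def by auto
      have "dM i \<ge> 1" unfolding dM_def using jn finM
        by (metis One_nat_def Suc_leI card_gt_0_iff empty_iff finite_Int)
      hence exd: "\<exists>i\<in>M. card (nbrs n g i \<inter> M) \<ge> 1" using ij(1) unfolding dM_def by blast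
      have n2: "n \<ge> 2"
      proof -
        have "i \<noteq> j" using ij irr by auto
        moreover have "i \<in> {1..n}" "j \<in> {1..n}" using ij Msub by auto
        ultimately show ?thesis by auto
      qed
      have anti: "\<And>x y. x \<le> y \<Longrightarrow> price_bound z0 y z \<le> price_bound z0 x z"
        using pb_anti z0p zp by blast
      have "Rv < Ps"
      proof (cases "z > z0 / 2")
        case True
        obtain S where S: "independent_set n g S" "S \<subseteq> M"
          "(\<Sum>i\<in>M. price_bound z0 (card (nbrs n g i \<inter> M)) z) < F z * real (card S)"
        proof -
          have w0: "price_bound z0 0 z \<le> F z" using pb0 by simp
          have wk: "\<And>k. k \<ge> 1 \<Longrightarrow> real (k + 1) * price_bound z0 k z < F z"
            using pb_big[OF z0p True] pb0 by simp
          show ?thesis using cw_aux[OF net anti w0 wk Msub] exd that by blast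
        qed
        have "F z * real (card S) \<le> F z * al"
          using indep_facts(2)[OF S(1)] Fpos[OF zp] unfolding al_def a_def by simp
        hence "Rv < al * F z - \<gamma> * z" using S(3) unfolding Rv_def dM_def by (simp add: algebra_simps)
        thus ?thesis using amgm_le[OF zp] by linarith
      next
        case False
        hence zs: "z \<le> z0 / 2" by simp
        have w0: "price_bound z0 0 z \<le> 7 / (20 * z0)" using pb_small[OF z0p zp zs, of 0] by simp
        obtain S where S: "independent_set n g S" "S \<subseteq> M"
          "(\<Sum>i\<in>M. price_bound z0 (card (nbrs n g i \<inter> M)) z) \<le> 7 / (20 * z0) * real (card S)"
        proof -
          have wk: "\<And>k. k \<ge> 1 \<Longrightarrow> real (k + 1) * price_bound z0 k z < 7 / (20 * z0)"
            using pb_small[OF z0p zp zs] by simp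
          show ?thesis using cw_aux[OF net anti w0 wk Msub] that by blast
        qed
        have "7 / (20 * z0) * real (card S) \<le> 7 / (20 * z0) * al"
          using indep_facts(2)[OF S(1)] z0p unfolding al_def a_def
          by (intro mult_left_mono) auto
        hence R1: "Rv < 7 / (20 * z0) * al" using S(3) mult_pos_pos[OF gp zp] unfolding Rv_def dM_def by linarith
        have q3: "q \<le> 3/5" unfolding q_def using n2 by (simp add: field_simps)
        have "2 * (z0 * s) \<le> 13/20" using z0s q3 by linarith
        hence "2 * (z0 * s) * sa \<le> 13/20 * sa" using sa1 by (simp add: mult_right_mono)
        also have "\<dots> \<le> 13/20 * (sa * sa)" using sa1 by simp
        also have "sa * sa = al" unfolding sa_def using al1 by simp
        finally have k: "2 * z0 * (s * sa) \<le> 13/20 * al" by (simp add: algebra_simps)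
        have gt: "\<gamma> * t = s * sa" using tsa ss by (metis mult.assoc mult.commute)
        have k2: "2 * z0 * (\<gamma> * t) \<le> 13/20 * al" using k gt by simp
        have "2 * \<gamma> * t \<le> 13/20 * al / z0" using k2 z0p by (simp add: field_simps)
        moreover have "\<gamma> * z0 > 0" using gp z0p by simp
        moreover have "7 / (20 * z0) * al = al / z0 - 13/20 * al / z0" by (simp add: field_simps)
        ultimately have "7 / (20 * z0) * al \<le> Ps" unfolding Ps_def by linarith
        thus ?thesis using R1 by linarith
      qed
      thus False using PsR by linarith
    qed
    have dM0: "\<And>i. i \<in> M \<Longrightarrow> dM i = 0"
      using Mind unfolding dM_def independent_set_def nbrs_def by auto
    have RvF: "Rv = real (card M) * F z - \<gamma> * z"
      unfolding Rv_def using dM0 pb0 by simp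
    have cM: "card M \<le> a" using indep_facts(2)[OF Mind] unfolding a_def .
    have "real (card M) * F z \<le> al * F z" using cM Fpos[OF zp] unfolding al_def by simp
    hence eq1: "real (card M) * F z = al * F z" and eq2: "al * F z - \<gamma> * z = Ps"
      using PsR RvF amgm_le[OF zp] by linarith+
    have cMa: "card M = a" using eq1 Fpos[OF zp] unfolding al_def by simp
    have "\<gamma> * (z0 + z - t)^2 / (z0 + z) = 0" using amgm[OF zp] eq2 by simp
    hence "z0 + z - t = 0" using gp z0p zp by simp
    hence zeq: "z = t - z0" by simp
    have pF: "p i \<le> F z" if "i \<in> M" for i
    proof -
      have "p i \<le> price_bound z0 (dM i) z" using ple[OF that] .
      also have "dM i = 0" using dM0[OF that] .
      finally show ?thesis using pb0[of z] by simp
    qed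
    have sumeq: "(\<Sum>i\<in>M. p i) = (\<Sum>i\<in>M. F z)"
    proof -
      have "(\<Sum>i\<in>M. p i) \<le> (\<Sum>i\<in>M. F z)" using pF by (intro sum_mono) simp
      moreover have "Rv = Ps" using RvF eq1 eq2 by linarith
      moreover have "Ps \<le> (\<Sum>i\<in>M. p i) - \<gamma> * z" using opt[OF feasCs] profCs prof by linarith
      moreover have "(\<Sum>i\<in>M. F z) = real (card M) * F z" by simp
      ultimately show ?thesis using RvF by linarith
    qed
    have peq: "p i = F z" if "i \<in> M" for i
    proof -
      have s0: "(\<Sum>i\<in>M. F z - p i) = 0" using sumeq by (simp only: sum_subtractf)
      have nn: "\<forall>i\<in>M. F z - p i \<ge> 0" using pF by simp
      have "(\<Sum>i\<in>M. F z - p i) = 0 \<longleftrightarrow> (\<forall>i\<in>M. F z - p i = 0)"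
        by (rule sum_nonneg_eq_0_iff[OF finM]) (use nn in blast)
      hence "F z - p i = 0" using s0 that by blast
      thus ?thesis by simp
    qed
    have Fz: "F z = 1 / z0 - sqrt (\<gamma> / al)"
    proof -
      have "F z = 1 / z0 - 1 / t" unfolding F_def zeq by simp
      also have "1 / t = sqrt (\<gamma> / al)" unfolding t_def by (simp add: real_sqrt_divide)
      finally show ?thesis .
    qed
    show ?thesis
    proof (intro conjI)
      show "max_independent_set n g M" using Mind cMa unfolding max_independent_set_def a_def by simp
      show "z = sqrt (real (independence_number n g) / \<gamma>) - z0" using zeq unfolding t_def al_def a_def .
      show "\<forall>i\<in>M. p i = 1 / z0 - sqrt (\<gamma> / real (independence_number n g))"
        using peq Fz unfolding al_def a_def by simp
    qed
  qed
qed

end
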